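(* Let $(\Xi,\mathcal G,\mathbb Q)$ be a probability space, $W^1=(W^1_t)_{0\le t\le T}$ and $W^2=(W^2_t)_{0\le t\le T}$ two independent identically distributed $\mathbb R^m$-valued processes with continuous trajectories and $\mathbb E_{\mathbb Q}[\sup_{t\le T}|W^1_t|^q]<\infty$, and let $(W^{i,j}_{s,t})_{0\le s\le t\le T}$, $i,j=1,2$, be four $\mathbb R^{m\times m}$-valued continuous two-parameter processes with $\mathbb E_{\mathbb Q}[\sup_{s\le t}|W^{i,j}_{s,t}|^q]<\infty$, such that $(W^1,W^{1,1})$ is independent of $W^2$ and, for $\mathbb Q$-a.e. $\xi$, $W^{i,j}_{r,t}(\xi)=W^{i,j}_{r,s}(\xi)+W^{i,j}_{s,t}(\xi)+W^i_{r,s}(\xi)\otimes W^j_{s,t}(\xi)$ for all $i,j\in\{1,2\}$ and $0\le r\le s\le t\le T$. For $i=1,2$ and $n\ge0$ let $W^{i,n}$ be the linear interpolation of $W^i$ at the dyadic points $t^k_n=kT/2^n$: $$W^{i,n}_t(\xi)=\sum_{k=0}^{2^n-1}\Big(W^i_{t^k_n}(\xi)+W^i_{t^k_n,t^{k+1}_n}(\xi)\frac{2^n(t-t^k_n)}{T}\Big)\mathbf 1_{[t^k_n,t^{k+1}_n)}(t).$$ If for $\mathbb Q$-a.e. $\xi\in\Xi$, for all $(s,t)\in\mathcal S_2^T$, $$W^{2,1}_{s,t}(\xi)=\lim_{n\to\infty}\int_s^t\big(W^{2,n}_r(\xi)-W^{2,n}_s(\xi)\big)\otimes dW^{1,n}_r(\xi),$$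 then there exists a measurable function $\mathcal I:C([0,T];\mathbb R^m)^2\to C(\mathcal S_2^T;\mathbb R^m\otimes\mathbb R^m)$ such that $\mathbb Q\big(\{\xi\in\Xi:W^{2,1}(\xi)=\mathcal I(W^2(\xi),W^1(\xi))\}\big)=1$.
   Context: $T>0$, $m\ge1$, $q\ge 1$ fixed; $\mathcal S_2^T=\{(s,t)\in[0,T]^2:s\le t\}$; for a path $f$, $f_{s,t}=f_t-f_s$. The integral in the hypothesis is a Riemann–Stieltjes integral against the piecewise linear path $W^{1,n}$. *)

theory Defs
  imports "HOL-Probability.Probability"
begin

definition simplex2 :: "real \<Rightarrow> (real \<times> real) set" where
  "simplex2 T = {(s,t). 0 \<le> s \<and> s \<le> t \<and> t \<le> T}"

definition outer :: "real^'m \<Rightarrow> real^'m \<Rightarrow> real^'m^'m" where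
  "outer a b = (\<chi> i. \<chi> j. a $ i * b $ j)"

definition dyadic_pt :: "real \<Rightarrow> nat \<Rightarrow> nat \<Rightarrow> real" where
  "dyadic_pt T n k = real k * T / 2 ^ n"

definition dyadic_interp :: "real \<Rightarrow> nat \<Rightarrow> (real \<Rightarrow> real^'m) \<Rightarrow> real \<Rightarrow> real^'m" where
  "dyadic_interp T n f t =
     (\<Sum>k<2^n. indicator {dyadic_pt T n k ..< dyadic_pt T n (Suc k)} t *\<^sub>R
        (f (dyadic_pt T n k) + ((2 ^ n * (t - dyadic_pt T n k)) / T) *\<^sub>R
            (f (dyadic_pt T n (Suc k)) - f (dyadic_pt T n k))))"

definition dyadic_interp_deriv :: "real \<Rightarrow> nat \<Rightarrow> (real \<Rightarrow> real^'m) \<Rightarrow> real \<Rightarrow> real^'m" where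
  "dyadic_interp_deriv T n f t =
     (\<Sum>k<2^n. indicator {dyadic_pt T n k ..< dyadic_pt T n (Suc k)} t *\<^sub>R
        ((2 ^ n / T) *\<^sub>R (f (dyadic_pt T n (Suc k)) - f (dyadic_pt T n k))))"

text \<open>The Riemann-Stieltjes integral  int_s^t (g^n_r - g^n_s) (x) d f^n_r  against the
  piecewise linear (absolutely continuous) path f^n, written as an integral against its derivative.\<close>
definition dyadic_rs_integral ::
  "real \<Rightarrow> nat \<Rightarrow> (real \<Rightarrow> real^'m) \<Rightarrow> (real \<Rightarrow> real^'m) \<Rightarrow> real \<Rightarrow> real \<Rightarrow> real^'m^'m" where
  "dyadic_rs_integral T n g f s t =
     integral {s..t} (\<lambda>r. outer (dyadic_interp T n g r - dyadic_interp T n g s)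
                                 (dyadic_interp_deriv T n f r))"

text \<open>Measurable space C([0,T]; R^m) (cylinder sigma-algebra = Borel sigma-algebra of sup norm).\<close>
definition cpaths :: "real \<Rightarrow> (real \<Rightarrow> real^'m) measure" where
  "cpaths T = restrict_space (Pi\<^sub>M {0..T} (\<lambda>_. borel)) {f. continuous_on {0..T} f}"

definition csimplex_paths :: "real \<Rightarrow> (real \<times> real \<Rightarrow> real^'m^'m) measure" where
  "csimplex_paths T = restrict_space (Pi\<^sub>M (simplex2 T) (\<lambda>_. borel)) {f. continuous_on (simplex2 T) f}"

definition events_gen :: "'a measure \<Rightarrow> 'b measure \<Rightarrow> ('a \<Rightarrow> 'b) \<Rightarrow> 'a set set" where
  "events_gen Q M X = {X -` S \<inter> space Q | S. S \<in> sets M}"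

end

theory Submission
  imports Defs
begin


lemma dyadic_pt_in: "T > 0 \<Longrightarrow> k \<le> 2^n \<Longrightarrow> dyadic_pt T n k \<in> {0..T}"
  unfolding dyadic_pt_def by (auto simp: field_simps)

lemma interp_restrict: "T > 0 \<Longrightarrow> dyadic_interp T n (restrict g {0..T}) = dyadic_interp T n g"
  unfolding dyadic_interp_def
  apply (intro ext sum.cong refl)
  subgoal for t k using dyadic_pt_in[of T k n] dyadic_pt_in[of T "Suc k" n] by simp
  done

lemma deriv_restrict: "T > 0 \<Longrightarrow> dyadic_interp_deriv T n (restrict g {0..T}) = dyadic_interp_deriv T n g"
  unfolding dyadic_interp_deriv_def
  apply (intro ext sum.cong refl)
  subgoal for t k using dyadic_pt_in[of T k n] dyadic_pt_in[of T "Suc k" n] by simp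
  done

lemma outer_meas[measurable (raw)]:
  assumes "f \<in> borel_measurable M" "g \<in> borel_measurable M"
  shows "(\<lambda>x. outer (f x) (g x)) \<in> borel_measurable M"
proof (rule borel_measurable_continuous_Pair[OF assms])
  show "continuous_on UNIV (\<lambda>x. outer (fst x) (snd x))"
    unfolding outer_def
    by (intro continuous_on_vec_lambda continuous_intros)
qed

lemma interp_meas:
  assumes T: "T > 0" and G: "\<And>y. y \<in> {0..T} \<Longrightarrow> (\<lambda>x. G x y) \<in> borel_measurable M"
    and R[measurable]: "R \<in> borel_measurable M"
  shows "(\<lambda>x. dyadic_interp T n (G x) (R x)) \<in> borel_measurable M"
    "(\<lambda>x. dyadic_interp_deriv T n (G x) (R x)) \<in> borel_measurable M"
  unfolding dyadic_interp_def dyadic_interp_deriv_def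
proof -
  have Gk: "(\<lambda>x. G x (dyadic_pt T n k)) \<in> borel_measurable M" if "k \<le> 2^n" for k
    using G dyadic_pt_in[OF T] that by auto
  show "(\<lambda>x. \<Sum>k<2 ^ n. indicator {dyadic_pt T n k..<dyadic_pt T n (Suc k)} (R x) *\<^sub>R
              (G x (dyadic_pt T n k) + (2 ^ n * (R x - dyadic_pt T n k) / T) *\<^sub>R (G x (dyadic_pt T n (Suc k)) - G x (dyadic_pt T n k))))
    \<in> borel_measurable M"
  proof (intro borel_measurable_sum)
    fix k assume "k \<in> {..<(2::nat)^n}"
    then have [measurable]: "(\<lambda>x. G x (dyadic_pt T n k)) \<in> borel_measurable M"
      "(\<lambda>x. G x (dyadic_pt T n (Suc k))) \<in> borel_measurable M" using Gk by auto
    show "(\<lambda>x. indicator {dyadic_pt T n k..<dyadic_pt T n (Suc k)} (R x) *\<^sub>R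
              (G x (dyadic_pt T n k) + (2 ^ n * (R x - dyadic_pt T n k) / T) *\<^sub>R (G x (dyadic_pt T n (Suc k)) - G x (dyadic_pt T n k))))
    \<in> borel_measurable M" by measurable
  qed
  show "(\<lambda>x. \<Sum>k<2 ^ n. indicator {dyadic_pt T n k..<dyadic_pt T n (Suc k)} (R x) *\<^sub>R
              ((2 ^ n / T) *\<^sub>R (G x (dyadic_pt T n (Suc k)) - G x (dyadic_pt T n k))))
    \<in> borel_measurable M"
  proof (intro borel_measurable_sum)
    fix k assume "k \<in> {..<(2::nat)^n}"
    then have [measurable]: "(\<lambda>x. G x (dyadic_pt T n k)) \<in> borel_measurable M"
      "(\<lambda>x. G x (dyadic_pt T n (Suc k))) \<in> borel_measurable M" using Gk by auto
    show "(\<lambda>x. indicator {dyadic_pt T n k..<dyadic_pt T n (Suc k)} (R x) *\<^sub>R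
              ((2 ^ n / T) *\<^sub>R (G x (dyadic_pt T n (Suc k)) - G x (dyadic_pt T n k))))
    \<in> borel_measurable M" by measurable
  qed
qed

lemma coord_meas: "y \<in> {0..T} \<Longrightarrow> (\<lambda>g. g y) \<in> borel_measurable (cpaths T)"
  unfolding cpaths_def by (rule measurable_restrict_space1) (rule measurable_component_singleton, simp)

definition hfun :: "real \<Rightarrow> nat \<Rightarrow> real \<Rightarrow> (real\<Rightarrow>real^'m)\<times>(real\<Rightarrow>real^'m) \<Rightarrow> real \<Rightarrow> real^'m^'m" where
 "hfun T n s \<omega> r = outer (dyadic_interp T n (fst \<omega>) r - dyadic_interp T n (fst \<omega>) s) (dyadic_interp_deriv T n (snd \<omega>) r)"

lemma norm_outer: "norm (outer a b) = norm a * norm b"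
proof -
  have e: "outer a b $ i = a $ i *\<^sub>R b" for i
    by (simp add: outer_def vec_eq_iff)
  have "norm (outer a b) = L2_set (\<lambda>i. norm (outer a b $ i)) UNIV"
    by (simp add: norm_vec_def)
  also have "\<dots> = L2_set (\<lambda>i. norm b * norm (a $ i)) UNIV"
    by (simp only: e norm_scaleR real_norm_def mult.commute)
  also have "\<dots> = norm b * L2_set (\<lambda>i. norm (a $ i)) UNIV"
    by (simp only: L2_set_right_distrib norm_ge_zero)
  also have "\<dots> = norm b * norm a"
    by (simp add: norm_vec_def)
  finally show ?thesis by simp
qed

lemma interp_bound:
  assumes T: "T > 0"
  shows "norm (dyadic_interp T n g r) \<le> (\<Sum>k<2^n. norm (g (dyadic_pt T n k)) + norm (g (dyadic_pt T n (Suc k)) - g (dyadic_pt T n k)))"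
  unfolding dyadic_interp_def
proof (rule order_trans[OF norm_sum], rule sum_mono)
  fix k assume "k \<in> {..<(2::nat)^n}"
  show "norm (indicator {dyadic_pt T n k..<dyadic_pt T n (Suc k)} r *\<^sub>R
             (g (dyadic_pt T n k) + (2 ^ n * (r - dyadic_pt T n k) / T) *\<^sub>R (g (dyadic_pt T n (Suc k)) - g (dyadic_pt T n k))))
    \<le> norm (g (dyadic_pt T n k)) + norm (g (dyadic_pt T n (Suc k)) - g (dyadic_pt T n k))"
  proof (cases "r \<in> {dyadic_pt T n k..<dyadic_pt T n (Suc k)}")
    case True
    define c where "c = 2 ^ n * (r - dyadic_pt T n k) / T"
    have d: "dyadic_pt T n (Suc k) - dyadic_pt T n k = T / 2^n" by (simp add: dyadic_pt_def field_simps)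
    have "r - dyadic_pt T n k \<le> T/2^n" using True d by auto
    then have "(r - dyadic_pt T n k) * 2^n \<le> T" by (simp add: pos_le_divide_eq)
    then have "c \<le> 1" using T by (simp add: c_def mult.commute)
    moreover have "0 \<le> c" using True T by (simp add: c_def)
    ultimately have "0 \<le> c" "c \<le> 1" by auto
    then have "norm (c *\<^sub>R (g (dyadic_pt T n (Suc k)) - g (dyadic_pt T n k))) \<le> norm (g (dyadic_pt T n (Suc k)) - g (dyadic_pt T n k))"
      by (simp add: mult_left_le_one_le)
    have "norm (indicator {dyadic_pt T n k..<dyadic_pt T n (Suc k)} r *\<^sub>R
             (g (dyadic_pt T n k) + c *\<^sub>R (g (dyadic_pt T n (Suc k)) - g (dyadic_pt T n k))))
        = norm (g (dyadic_pt T n k) + c *\<^sub>R (g (dyadic_pt T n (Suc k)) - g (dyadic_pt T n k)))"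
      using True by simp
    also have "\<dots> \<le> norm (g (dyadic_pt T n k)) + norm (c *\<^sub>R (g (dyadic_pt T n (Suc k)) - g (dyadic_pt T n k)))"
      by (rule norm_triangle_ineq)
    finally show ?thesis unfolding c_def[symmetric] using \<open>norm (c *\<^sub>R _) \<le> _\<close> by linarith
  next
    case False
    then show ?thesis by simp
  qed
qed

lemma deriv_bound:
  shows "norm (dyadic_interp_deriv T n g r) \<le> (\<Sum>k<2^n. norm ((2 ^ n / T) *\<^sub>R (g (dyadic_pt T n (Suc k)) - g (dyadic_pt T n k))))"
  unfolding dyadic_interp_deriv_def
  by (rule order_trans[OF norm_sum], rule sum_mono) (auto simp: indicator_def)

lemma hfun_bound:
  assumes T: "T > 0"
  shows "\<exists>C\<ge>0. \<forall>r. norm (hfun T n s \<omega> r) \<le> C"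
proof -
  obtain C1 where C1: "\<And>r. norm (dyadic_interp T n (fst \<omega>) r) \<le> C1"
    using interp_bound[OF T] by blast
  obtain C2 where C2: "\<And>r. norm (dyadic_interp_deriv T n (snd \<omega>) r) \<le> C2"
    using deriv_bound by blast
  have C10: "0 \<le> C1" using C1[of 0] by (rule order_trans[OF norm_ge_zero])
  have "norm (hfun T n s \<omega> r) \<le> (C1 + C1) * C2" for r
    unfolding hfun_def norm_outer
    by (intro mult_mono C2 order_trans[OF norm_triangle_ineq4] add_mono C1) (auto simp: C10)
  moreover have "0 \<le> (C1 + C1) * C2"
  proof -
    have "0 \<le> C1" using C1[of 0] by (rule order_trans[OF norm_ge_zero])
    moreover have "0 \<le> C2" using C2[of 0] by (rule order_trans[OF norm_ge_zero])
    ultimately show ?thesis by simp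
  qed
  ultimately show ?thesis by blast
qed

lemma hfun_meas_r:
  assumes T: "T > 0"
  shows "hfun T n s \<omega> \<in> borel_measurable lborel"
proof -
  have [measurable]: "(\<lambda>r. dyadic_interp T n (fst \<omega>) r) \<in> borel_measurable lborel"
    using interp_meas(1)[of T "\<lambda>_. fst \<omega>" lborel "\<lambda>r. r" n] T by simp
  have [measurable]: "(\<lambda>r. dyadic_interp_deriv T n (snd \<omega>) r) \<in> borel_measurable lborel"
    using interp_meas(2)[of T "\<lambda>_. snd \<omega>" lborel "\<lambda>r. r" n] T by simp
  show ?thesis unfolding hfun_def by measurable
qed

lemma rs_eq_lebesgue:
  assumes T: "T > 0"
  shows "dyadic_rs_integral T n g f s t = (\<integral>r. indicator {s..t} r *\<^sub>R hfun T n s (g,f) r \<partial>lborel)"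
proof -
  obtain C where C: "C \<ge> 0" "\<And>r. norm (hfun T n s (g,f) r) \<le> C" using hfun_bound[OF T] by blast
  have "set_integrable lborel {s..t} (hfun T n s (g,f))"
    unfolding set_integrable_def
  proof (rule Bochner_Integration.integrable_bound[of lborel "\<lambda>x. C * indicator {s..t} x"])
    show "integrable lborel (\<lambda>x. C * indicat_real {s..t} x)"
      by (rule borel_integrable_atLeastAtMost) auto
    show "(\<lambda>x. indicat_real {s..t} x *\<^sub>R hfun T n s (g, f) x) \<in> borel_measurable lborel"
      using hfun_meas_r[OF T] by measurable
    show "AE x in lborel. norm (indicat_real {s..t} x *\<^sub>R hfun T n s (g, f) x) \<le> norm (C * indicat_real {s..t} x)"
      using C by (auto simp: indicator_def)
  qed
  from set_borel_integral_eq_integral(2)[OF this] show ?thesis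
    unfolding dyadic_rs_integral_def set_lebesgue_integral_def hfun_def by simp
qed

lemma hfun_meas_joint:
  assumes T: "T > 0"
  shows "(\<lambda>(\<omega>, r). indicator {s..t} r *\<^sub>R hfun T n s \<omega> r) \<in> borel_measurable ((cpaths T \<Otimes>\<^sub>M cpaths T) \<Otimes>\<^sub>M lborel)"
proof -
  have G1: "(\<lambda>z::((real\<Rightarrow>real^'m)\<times>(real\<Rightarrow>real^'m))\<times>real. fst (fst z) y) \<in> borel_measurable ((cpaths T \<Otimes>\<^sub>M cpaths T) \<Otimes>\<^sub>M lborel)"
    if "y \<in> {0..T}" for y
  proof -
    have [measurable]: "(\<lambda>g. g y) \<in> borel_measurable (cpaths T)" by (rule coord_meas[OF that])
    show ?thesis by measurable
  qed
  have G2: "(\<lambda>z::((real\<Rightarrow>real^'m)\<times>(real\<Rightarrow>real^'m))\<times>real. snd (fst z) y) \<in> borel_measurable ((cpaths T \<Otimes>\<^sub>M cpaths T) \<Otimes>\<^sub>M lborel)"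
    if "y \<in> {0..T}" for y
  proof -
    have [measurable]: "(\<lambda>g. g y) \<in> borel_measurable (cpaths T)" by (rule coord_meas[OF that])
    show ?thesis by measurable
  qed
  have [measurable]: "(\<lambda>z::((real\<Rightarrow>real^'m)\<times>(real\<Rightarrow>real^'m))\<times>real. dyadic_interp T n (fst (fst z)) (snd z)) \<in> borel_measurable ((cpaths T \<Otimes>\<^sub>M cpaths T) \<Otimes>\<^sub>M lborel)"
    by (rule interp_meas(1)[OF T G1]) measurable
  have [measurable]: "(\<lambda>z::((real\<Rightarrow>real^'m)\<times>(real\<Rightarrow>real^'m))\<times>real. dyadic_interp T n (fst (fst z)) s) \<in> borel_measurable ((cpaths T \<Otimes>\<^sub>M cpaths T) \<Otimes>\<^sub>M lborel)"
    by (rule interp_meas(1)[OF T G1]) measurable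
  have [measurable]: "(\<lambda>z::((real\<Rightarrow>real^'m)\<times>(real\<Rightarrow>real^'m))\<times>real. dyadic_interp_deriv T n (snd (fst z)) (snd z)) \<in> borel_measurable ((cpaths T \<Otimes>\<^sub>M cpaths T) \<Otimes>\<^sub>M lborel)"
    by (rule interp_meas(2)[OF T G2]) measurable
  show ?thesis
    unfolding hfun_def case_prod_beta by measurable
qed



definition pk :: "nat \<Rightarrow> real \<times> real \<Rightarrow> real \<times> real" where
  "pk k x = (\<lfloor>fst x * 2^k\<rfloor> / 2^k, \<lfloor>snd x * 2^k\<rfloor> / 2^k)"

definition Dset :: "real \<Rightarrow> (real \<times> real) set" where
  "Dset T = {pk k x | k x. x \<in> simplex2 T}"

lemma floor_approx_le: "real_of_int \<lfloor>y * 2^k\<rfloor> / 2^k \<le> (y::real)"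
  by (simp add: divide_le_eq)

lemma floor_approx_ge: "y - 1 / 2^k \<le> real_of_int \<lfloor>y * 2^k\<rfloor> / 2^k"
proof -
  have "y * 2^k - 1 \<le> real_of_int \<lfloor>y * 2^k\<rfloor>" by linarith
  then have "(y * 2^k - 1) / 2^k \<le> real_of_int \<lfloor>y * 2^k\<rfloor> / 2^k"
    by (intro divide_right_mono) auto
  then show ?thesis by (simp add: diff_divide_distrib)
qed

lemma floor_approx_lim: "(\<lambda>k. real_of_int \<lfloor>y * 2^k\<rfloor> / 2^k) \<longlonglongrightarrow> (y::real)"
proof (rule tendsto_sandwich[of "\<lambda>k. y - 1 / 2^k" _ _ "\<lambda>k. y"])
  show "\<forall>\<^sub>F n in sequentially. y - 1 / 2 ^ n \<le> real_of_int \<lfloor>y * 2 ^ n\<rfloor> / 2 ^ n"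
    using floor_approx_ge by auto
  show "\<forall>\<^sub>F n in sequentially. real_of_int \<lfloor>y * 2 ^ n\<rfloor> / 2 ^ n \<le> y"
    using floor_approx_le by auto
  have "(\<lambda>k. inverse ((2::real) ^ k)) \<longlonglongrightarrow> 0"
    by (rule LIMSEQ_inverse_realpow_zero) simp
  then have "(\<lambda>k. y - inverse ((2::real) ^ k)) \<longlonglongrightarrow> y - 0"
    by (intro tendsto_diff tendsto_const)
  then show "(\<lambda>k. y - 1 / 2 ^ k) \<longlonglongrightarrow> y" by (simp add: divide_inverse)
qed simp

lemma pk_lim: "(\<lambda>k. pk k x) \<longlonglongrightarrow> x"
proof -
  have "(\<lambda>k. (real_of_int \<lfloor>fst x * 2^k\<rfloor> / 2^k, real_of_int \<lfloor>snd x * 2^k\<rfloor> / 2^k)) \<longlonglongrightarrow> (fst x, snd x)"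
    by (intro tendsto_Pair floor_approx_lim)
  then show ?thesis by (simp add: pk_def)
qed

lemma pk_in: assumes "x \<in> simplex2 T" shows "pk k x \<in> simplex2 T"
proof -
  obtain s t where x: "x = (s,t)" "0 \<le> s" "s \<le> t" "t \<le> T" using assms by (auto simp: simplex2_def)
  have "0 \<le> real_of_int \<lfloor>s * 2^k\<rfloor>" using x by simp
  moreover have "real_of_int \<lfloor>s * 2^k\<rfloor> \<le> real_of_int \<lfloor>t * 2^k\<rfloor>"
    using x by (simp add: floor_mono)
  moreover have "real_of_int \<lfloor>t * 2^k\<rfloor> / 2^k \<le> T" using floor_approx_le[of t k] x by linarith
  ultimately show ?thesis using x by (auto simp: simplex2_def pk_def divide_right_mono)
qed

lemma Dset_sub: "Dset T \<subseteq> simplex2 T"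
  using pk_in by (auto simp: Dset_def)

lemma pk_Dset: "x \<in> simplex2 T \<Longrightarrow> pk k x \<in> Dset T"
  unfolding Dset_def by blast

lemma Dset_countable: "countable (Dset T)"
proof (rule countable_subset)
  show "Dset T \<subseteq> (\<lambda>(a,b,k). (real_of_int a / 2^k, real_of_int b / 2^k)) ` (UNIV :: (int \<times> int \<times> nat) set)"
  proof
    fix p assume "p \<in> Dset T"
    then obtain k x where "p = pk k x" unfolding Dset_def by blast
    then have "p = (\<lambda>(a,b,k). (real_of_int a / 2^k, real_of_int b / 2^k)) (\<lfloor>fst x * 2^k\<rfloor>, \<lfloor>snd x * 2^k\<rfloor>, k)"
      by (simp add: pk_def)
    then show "p \<in> range (\<lambda>(a,b,k). (real_of_int a / 2^k, real_of_int b / 2^k))" by blast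
  qed
qed simp

lemma Dset_ne: "T > 0 \<Longrightarrow> Dset T \<noteq> {}"
  using pk_Dset[of "(0,0)" T 0] by (auto simp: simplex2_def)

lemma simplex2_compact: "compact (simplex2 T)"
proof -
  have "simplex2 T = {x. 0 \<le> fst x} \<inter> {x. fst x \<le> snd x} \<inter> {x. snd x \<le> T}"
    by (auto simp: simplex2_def)
  then have "closed (simplex2 T)"
    by (simp add: closed_Collect_le continuous_on_fst continuous_on_snd closed_Int continuous_on_const)
  moreover have "bounded (simplex2 T)"
  proof -
    have "simplex2 T \<subseteq> cbox (0,0) (T,T)"
      by (auto simp: simplex2_def cbox_Pair_iff)
    then show ?thesis using bounded_cbox bounded_subset by blast
  qed
  ultimately show ?thesis by (simp add: compact_eq_bounded_closed)
qed

lemma dense_eq: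
  assumes f: "continuous_on (simplex2 T) f" and g: "continuous_on (simplex2 T) g"
    and eq: "\<And>p. p \<in> Dset T \<Longrightarrow> f p = g p" and x: "x \<in> simplex2 T"
  shows "f x = (g x :: 'a::metric_space)"
proof -
  have "(\<lambda>k. f (pk k x)) \<longlonglongrightarrow> f x"
    by (rule continuous_on_tendsto_compose[OF f pk_lim x]) (simp add: pk_in x)
  moreover have "(\<lambda>k. g (pk k x)) \<longlonglongrightarrow> g x"
    by (rule continuous_on_tendsto_compose[OF g pk_lim x]) (simp add: pk_in x)
  moreover have "f (pk k x) = g (pk k x)" for k using eq pk_Dset x by blast
  ultimately show ?thesis using LIMSEQ_unique by auto
qed



definition Efun :: "real \<Rightarrow> nat \<Rightarrow> real \<times> real \<Rightarrow> (real\<Rightarrow>real^'m)\<times>(real\<Rightarrow>real^'m) \<Rightarrow> real^'m^'m" where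
  "Efun T n p \<omega> = (\<integral>r. indicator {fst p..snd p} r *\<^sub>R hfun T n (fst p) \<omega> r \<partial>lborel)"

definition Lfun :: "real \<Rightarrow> real \<times> real \<Rightarrow> (real\<Rightarrow>real^'m)\<times>(real\<Rightarrow>real^'m) \<Rightarrow> real^'m^'m" where
  "Lfun T p \<omega> = lim (\<lambda>n. Efun T n p \<omega>)"

definition Cset :: "real \<Rightarrow> ((real\<Rightarrow>real^'m)\<times>(real\<Rightarrow>real^'m)) set" where
  "Cset T = {\<omega>. \<forall>e::nat. \<exists>d::nat. \<forall>i::nat. \<forall>j::nat.
     dist (from_nat_into (Dset T) i) (from_nat_into (Dset T) j) < 1 / Suc d \<longrightarrow>
     dist (Lfun T (from_nat_into (Dset T) i) \<omega>) (Lfun T (from_nat_into (Dset T) j) \<omega>) \<le> 1 / Suc e}"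

definition Ifun :: "real \<Rightarrow> (real\<Rightarrow>real^'m)\<times>(real\<Rightarrow>real^'m) \<Rightarrow> real \<times> real \<Rightarrow> real^'m^'m" where
  "Ifun T \<omega> = (\<lambda>x\<in>simplex2 T. if \<omega> \<in> Cset T then lim (\<lambda>k. Lfun T (pk k x) \<omega>) else 0)"

lemma Lfun_meas:
  assumes T: "T > 0"
  shows "Lfun T p \<in> borel_measurable (cpaths T \<Otimes>\<^sub>M cpaths T)"
proof -
  have "Efun T n p \<in> borel_measurable (cpaths T \<Otimes>\<^sub>M cpaths T)" for n
    unfolding Efun_def
    by (rule lborel.borel_measurable_lebesgue_integral) (rule hfun_meas_joint[OF T])
  then show ?thesis unfolding Lfun_def by (rule borel_measurable_lim_metric)
qed

lemma Dset_range: "T > 0 \<Longrightarrow> range (from_nat_into (Dset T)) = Dset T"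
  by (rule range_from_nat_into[OF Dset_ne Dset_countable])

lemma Cset_meas:
  assumes T: "T > 0"
  shows "Cset T \<inter> space (cpaths T \<Otimes>\<^sub>M cpaths T) \<in> sets (cpaths T \<Otimes>\<^sub>M cpaths T)"
proof -
  have [measurable]: "\<And>p. Lfun T p \<in> borel_measurable (cpaths T \<Otimes>\<^sub>M cpaths T)"
    using Lfun_meas[OF T] .
  have "Measurable.pred (cpaths T \<Otimes>\<^sub>M cpaths T) (\<lambda>\<omega>. \<omega> \<in> Cset T)"
    unfolding Cset_def mem_Collect_eq
    by measurable
  then show ?thesis unfolding Measurable.pred_def by (simp add: Int_def conj_commute)
qed

lemma Cset_cont:
  assumes T: "T > 0" and w: "\<omega> \<in> Cset T"
  shows "continuous_on (simplex2 T) (\<lambda>x. lim (\<lambda>k. Lfun T (pk k x) \<omega>))"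
proof -
  define F where "F a = Lfun T a \<omega>" for a
  define D where "D = Dset T"
  have uc: "uniformly_continuous_on D F"
    unfolding uniformly_continuous_on_def
  proof (intro allI impI)
    fix e :: real assume "e > 0"
    then obtain n where n: "n > 0" "inverse (real n) < e" using ex_inverse_of_nat_less by blast
    define N where "N = n - 1"
    have N: "inverse (real (Suc N)) < e" using n by (simp add: N_def)
    obtain d where d: "\<And>i j. dist (from_nat_into D i) (from_nat_into D j) < 1 / Suc d \<Longrightarrow>
       dist (F (from_nat_into D i)) (F (from_nat_into D j)) \<le> 1 / Suc N"
      using w unfolding Cset_def F_def D_def by blast
    show "\<exists>d>0. \<forall>x\<in>D. \<forall>x'\<in>D. dist x' x < d \<longrightarrow> dist (F x') (F x) < e"
    proof (intro exI[of _ "1 / Suc d"] conjI ballI impI)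
      fix x x' assume "x \<in> D" "x' \<in> D" "dist x' x < 1 / Suc d"
      moreover obtain i where "x' = from_nat_into D i" using \<open>x' \<in> D\<close> Dset_range[OF T] unfolding D_def by blast
      moreover obtain j where "x = from_nat_into D j" using \<open>x \<in> D\<close> Dset_range[OF T] unfolding D_def by blast
      ultimately have "dist (F x') (F x) \<le> 1 / Suc N" using d by blast
      then show "dist (F x') (F x) < e" using N by (simp add: divide_inverse)
    qed simp
  qed
  obtain G where G: "uniformly_continuous_on (closure D) G" "\<And>x. x \<in> D \<Longrightarrow> F x = G x"
    using uniformly_continuous_on_extension_on_closure[OF uc] by metis
  have Gc: "continuous_on (closure D) G" using G(1) uniformly_continuous_imp_continuous by blast
  have sub: "simplex2 T \<subseteq> closure D"
  proof
    fix x assume x: "x \<in> simplex2 T"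
    show "x \<in> closure D" unfolding closure_sequential
      using pk_lim[of x] pk_Dset[OF x] unfolding D_def by (intro exI[of _ "\<lambda>k. pk k x"]) auto
  qed
  have "lim (\<lambda>k. Lfun T (pk k x) \<omega>) = G x" if x: "x \<in> simplex2 T" for x
  proof -
    have "(\<lambda>k. G (pk k x)) \<longlonglongrightarrow> G x"
    proof (rule continuous_on_tendsto_compose[OF Gc pk_lim])
      show "x \<in> closure D" using x sub by blast
      have "pk k x \<in> closure D" for k using pk_Dset[OF x] closure_subset unfolding D_def by blast
      then show "\<forall>\<^sub>F k in sequentially. pk k x \<in> closure D" by (rule always_eventually[OF allI])
    qed
    moreover have "G (pk k x) = Lfun T (pk k x) \<omega>" for k
      using G(2)[of "pk k x"] pk_Dset[OF x] unfolding F_def D_def by simp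
    ultimately show ?thesis by (simp add: limI)
  qed
  moreover have "continuous_on (simplex2 T) G" using Gc sub continuous_on_subset by blast
  ultimately show ?thesis using continuous_on_cong by (metis (no_types, lifting))
qed

lemma Ifun_cont:
  assumes T: "T > 0"
  shows "continuous_on (simplex2 T) (Ifun T \<omega>)"
proof -
  have "continuous_on (simplex2 T) (\<lambda>x. if \<omega> \<in> Cset T then lim (\<lambda>k. Lfun T (pk k x) \<omega>) else 0)"
    using Cset_cont[OF T, of \<omega>] by (cases "\<omega> \<in> Cset T") auto
  then show ?thesis unfolding Ifun_def
    by (rule continuous_on_cong[THEN iffD1, rotated 2]) auto
qed

lemma Ifun_meas_Pi:
  assumes T: "T > 0"
  shows "Ifun T \<in> cpaths T \<Otimes>\<^sub>M cpaths T \<rightarrow>\<^sub>M Pi\<^sub>M (simplex2 T) (\<lambda>_. borel)"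
  unfolding Ifun_def
proof (rule measurable_restrict)
  fix x
  have [measurable]: "\<And>p. Lfun T p \<in> borel_measurable (cpaths T \<Otimes>\<^sub>M cpaths T)"
    using Lfun_meas[OF T] .
  show "(\<lambda>\<omega>. if \<omega> \<in> Cset T then lim (\<lambda>k. Lfun T (pk k x) \<omega>) else 0) \<in> borel_measurable (cpaths T \<Otimes>\<^sub>M cpaths T)"
    by (rule measurable_If_set) (use Cset_meas[OF T] in measurable)
qed

lemma Ifun_meas:
  assumes T: "T > 0"
  shows "Ifun T \<in> cpaths T \<Otimes>\<^sub>M cpaths T \<rightarrow>\<^sub>M csimplex_paths T"
  unfolding csimplex_paths_def
  by (rule measurable_restrict_space2) (use Ifun_cont[OF T] Ifun_meas_Pi[OF T] in auto)



theorem proposition17: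
  fixes Q :: "'xi measure" and T q :: real
    and W :: "nat \<Rightarrow> 'xi \<Rightarrow> real \<Rightarrow> real^'m"
    and WW :: "nat \<Rightarrow> nat \<Rightarrow> 'xi \<Rightarrow> real \<Rightarrow> real \<Rightarrow> real^'m^'m"
  assumes Q: "prob_space Q" and T: "T > 0" and q: "q \<ge> 1"
    and meas_W: "\<And>i. i \<in> {1,2} \<Longrightarrow>
        (\<lambda>\<xi>. restrict (W i \<xi>) {0..T}) \<in> Q \<rightarrow>\<^sub>M Pi\<^sub>M {0..T} (\<lambda>_. borel)"
    and cont_W: "\<And>i \<xi>. i \<in> {1,2} \<Longrightarrow> \<xi> \<in> space Q \<Longrightarrow> continuous_on {0..T} (W i \<xi>)"
    and meas_WW: "\<And>i j. i \<in> {1,2} \<Longrightarrow> j \<in> {1,2} \<Longrightarrow>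
        (\<lambda>\<xi>. restrict (case_prod (WW i j \<xi>)) (simplex2 T)) \<in> Q \<rightarrow>\<^sub>M Pi\<^sub>M (simplex2 T) (\<lambda>_. borel)"
    and cont_WW: "\<And>i j \<xi>. i \<in> {1,2} \<Longrightarrow> j \<in> {1,2} \<Longrightarrow> \<xi> \<in> space Q \<Longrightarrow>
        continuous_on (simplex2 T) (case_prod (WW i j \<xi>))"
    and indep: "prob_space.indep_var Q
        (Pi\<^sub>M {0..T} (\<lambda>_. borel)) (\<lambda>\<xi>. restrict (W 1 \<xi>) {0..T})
        (Pi\<^sub>M {0..T} (\<lambda>_. borel)) (\<lambda>\<xi>. restrict (W 2 \<xi>) {0..T})"
    and ident: "distr Q (Pi\<^sub>M {0..T} (\<lambda>_. borel)) (\<lambda>\<xi>. restrict (W 1 \<xi>) {0..T})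
              = distr Q (Pi\<^sub>M {0..T} (\<lambda>_. borel)) (\<lambda>\<xi>. restrict (W 2 \<xi>) {0..T})"
    and mom_W: "(\<integral>\<^sup>+\<xi>. (SUP t\<in>{0..T}. ennreal (norm (W 1 \<xi> t) powr q)) \<partial>Q) < \<infinity>"
    and mom_WW: "\<And>i j. i \<in> {1,2} \<Longrightarrow> j \<in> {1,2} \<Longrightarrow>
        (\<integral>\<^sup>+\<xi>. (SUP st\<in>simplex2 T. ennreal (norm (case_prod (WW i j \<xi>) st) powr q)) \<partial>Q) < \<infinity>"
    and indep2: "prob_space.indep_set Q
        (events_gen Q (Pi\<^sub>M {0..T} (\<lambda>_. borel) \<Otimes>\<^sub>M Pi\<^sub>M (simplex2 T) (\<lambda>_. borel))
          (\<lambda>\<xi>. (restrict (W 1 \<xi>) {0..T}, restrict (case_prod (WW 1 1 \<xi>)) (simplex2 T))))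
        (events_gen Q (Pi\<^sub>M {0..T} (\<lambda>_. borel)) (\<lambda>\<xi>. restrict (W 2 \<xi>) {0..T}))"
    and chen: "AE \<xi> in Q. \<forall>i\<in>{1,2}. \<forall>j\<in>{1,2}. \<forall>r s t.
        0 \<le> r \<and> r \<le> s \<and> s \<le> t \<and> t \<le> T \<longrightarrow>
        WW i j \<xi> r t = WW i j \<xi> r s + WW i j \<xi> s t
                       + outer (W i \<xi> s - W i \<xi> r) (W j \<xi> t - W j \<xi> s)"
    and approx: "AE \<xi> in Q. \<forall>(s,t)\<in>simplex2 T.
        (\<lambda>n. dyadic_rs_integral T n (W 2 \<xi>) (W 1 \<xi>) s t) \<longlonglongrightarrow> WW 2 1 \<xi> s t"
  shows "\<exists>I. I \<in> cpaths T \<Otimes>\<^sub>M cpaths T \<rightarrow>\<^sub>M csimplex_paths T \<and>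
    measure Q {\<xi> \<in> space Q. restrict (case_prod (WW 2 1 \<xi>)) (simplex2 T)
                 = I (restrict (W 2 \<xi>) {0..T}, restrict (W 1 \<xi>) {0..T})} = 1"
proof -
  let ?M = "cpaths T \<Otimes>\<^sub>M cpaths T"
  define X where "X \<xi> = (restrict (W 2 \<xi>) {0..T}, restrict (W 1 \<xi>) {0..T})" for \<xi>
  have Wc: "restrict (W i \<xi>) {0..T} \<in> {f. continuous_on {0..T} f}" if "i \<in> {1,2}" "\<xi> \<in> space Q" for i \<xi>
  proof -
    have "continuous_on {0..T} (restrict (W i \<xi>) {0..T}) = continuous_on {0..T} (W i \<xi>)"
      by (rule continuous_on_cong) auto
    then show ?thesis using cont_W[OF that] by simp
  qed
  have Wm: "(\<lambda>\<xi>. restrict (W i \<xi>) {0..T}) \<in> Q \<rightarrow>\<^sub>M cpaths T" if "i \<in> {1,2}" for i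
    unfolding cpaths_def
    by (rule measurable_restrict_space2) (use Wc[OF that] meas_W[OF that] in auto)
  have Xm: "X \<in> Q \<rightarrow>\<^sub>M ?M"
    unfolding X_def by (rule measurable_Pair) (rule Wm; simp)+
  have Xs: "X \<xi> \<in> space ?M" if "\<xi> \<in> space Q" for \<xi>
    using measurable_space[OF Xm that] .
  define D where "D = Dset T"
  have Drange: "range (from_nat_into D) = D" unfolding D_def by (rule Dset_range[OF T])
  have Dsub: "D \<subseteq> simplex2 T" unfolding D_def by (rule Dset_sub)
  have good: "restrict (case_prod (WW 2 1 \<xi>)) (simplex2 T) = Ifun T (X \<xi>)"
    if \<xi>: "\<xi> \<in> space Q" and ap: "\<forall>(s,t)\<in>simplex2 T.
        (\<lambda>n. dyadic_rs_integral T n (W 2 \<xi>) (W 1 \<xi>) s t) \<longlonglongrightarrow> WW 2 1 \<xi> s t" for \<xi>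
  proof -
    have cWW: "continuous_on (simplex2 T) (case_prod (WW 2 1 \<xi>))" using cont_WW[OF _ _ \<xi>] by simp
    have L: "Lfun T p (X \<xi>) = case_prod (WW 2 1 \<xi>) p" if p: "p \<in> simplex2 T" for p
    proof -
      obtain s t where st: "p = (s,t)" by (cases p)
      have "Efun T n p (X \<xi>) = dyadic_rs_integral T n (W 2 \<xi>) (W 1 \<xi>) s t" for n
        unfolding Efun_def X_def st
        by (simp add: rs_eq_lebesgue[OF T, symmetric] dyadic_rs_integral_def interp_restrict[OF T] deriv_restrict[OF T])
      moreover have "(\<lambda>n. dyadic_rs_integral T n (W 2 \<xi>) (W 1 \<xi>) s t) \<longlonglongrightarrow> WW 2 1 \<xi> s t"
        using ap p st by auto
      ultimately show ?thesis unfolding Lfun_def st by (simp add: limI)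
    qed
    have "X \<xi> \<in> Cset T"
      unfolding Cset_def mem_Collect_eq
    proof
      fix e :: nat
      have "uniformly_continuous_on (simplex2 T) (case_prod (WW 2 1 \<xi>))"
        by (rule compact_uniformly_continuous[OF cWW simplex2_compact])
      moreover have pos: "1 / real (Suc e) > 0" by simp
      ultimately obtain \<delta> where \<delta>: "\<delta> > 0" "\<forall>x\<in>simplex2 T. \<forall>x'\<in>simplex2 T. dist x' x < \<delta> \<longrightarrow>
          dist (case_prod (WW 2 1 \<xi>) x') (case_prod (WW 2 1 \<xi>) x) < 1 / Suc e"
        unfolding uniformly_continuous_on_def by blast
      obtain n where n: "n > 0" "inverse (real n) < \<delta>" using ex_inverse_of_nat_less \<delta>(1) by blast
      define d where "d = n - 1"
      have d: "1 / real (Suc d) < \<delta>" using n by (simp add: d_def divide_inverse)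
      show "\<exists>d::nat. \<forall>i j. dist (from_nat_into (Dset T) i) (from_nat_into (Dset T) j) < 1 / Suc d \<longrightarrow>
         dist (Lfun T (from_nat_into (Dset T) i) (X \<xi>)) (Lfun T (from_nat_into (Dset T) j) (X \<xi>)) \<le> 1 / Suc e"
      proof (intro exI[of _ d] allI impI)
        fix i j assume "dist (from_nat_into (Dset T) i) (from_nat_into (Dset T) j) < 1 / Suc d"
        moreover have "from_nat_into (Dset T) i \<in> simplex2 T" "from_nat_into (Dset T) j \<in> simplex2 T"
          using Drange Dsub unfolding D_def by auto
        ultimately show "dist (Lfun T (from_nat_into (Dset T) i) (X \<xi>)) (Lfun T (from_nat_into (Dset T) j) (X \<xi>)) \<le> 1 / Suc e"
        proof -
          note a = \<open>dist (from_nat_into (Dset T) i) (from_nat_into (Dset T) j) < 1 / Suc d\<close>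
          have "dist (from_nat_into (Dset T) i) (from_nat_into (Dset T) j) < \<delta>" using a d by linarith
          then have "dist (case_prod (WW 2 1 \<xi>) (from_nat_into (Dset T) i)) (case_prod (WW 2 1 \<xi>) (from_nat_into (Dset T) j)) < 1 / Suc e"
            using \<delta>(2) \<open>from_nat_into (Dset T) i \<in> simplex2 T\<close> \<open>from_nat_into (Dset T) j \<in> simplex2 T\<close> by blast
          then show ?thesis
            using L[OF \<open>from_nat_into (Dset T) i \<in> simplex2 T\<close>] L[OF \<open>from_nat_into (Dset T) j \<in> simplex2 T\<close>] by simp
        qed
      qed
    qed
    moreover have "lim (\<lambda>k. Lfun T (pk k x) (X \<xi>)) = case_prod (WW 2 1 \<xi>) x" if x: "x \<in> simplex2 T" for x
    proof -
      have "(\<lambda>k. case_prod (WW 2 1 \<xi>) (pk k x)) \<longlonglongrightarrow> case_prod (WW 2 1 \<xi>) x"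
        by (rule continuous_on_tendsto_compose[OF cWW pk_lim x]) (simp add: pk_in x)
      moreover have "Lfun T (pk k x) (X \<xi>) = case_prod (WW 2 1 \<xi>) (pk k x)" for k
        using L pk_in x by blast
      ultimately show ?thesis by (simp add: limI)
    qed
    ultimately show ?thesis unfolding Ifun_def by (intro ext) auto
  qed
  have A: "(\<lambda>\<xi>. case_prod (WW 2 1 \<xi>) p) \<in> borel_measurable Q" if p: "p \<in> simplex2 T" for p
  proof -
    have "(\<lambda>\<xi>. restrict (case_prod (WW 2 1 \<xi>)) (simplex2 T) p) \<in> borel_measurable Q"
      using measurable_compose[OF meas_WW measurable_component_singleton[OF p]] by simp
    then show ?thesis using p by simp
  qed
  have B: "(\<lambda>\<xi>. Ifun T (X \<xi>) p) \<in> borel_measurable Q" if p: "p \<in> simplex2 T" for p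
    using measurable_compose[OF Xm measurable_compose[OF Ifun_meas_Pi[OF T] measurable_component_singleton[OF p]]] .
  have eqset: "{\<xi> \<in> space Q. restrict (case_prod (WW 2 1 \<xi>)) (simplex2 T) = Ifun T (X \<xi>)}
      = {\<xi> \<in> space Q. \<forall>i. case_prod (WW 2 1 \<xi>) (from_nat_into D i) = Ifun T (X \<xi>) (from_nat_into D i)}"
  proof (intro Collect_cong conj_cong refl iffI allI)
    fix \<xi> i assume eq: "restrict (case_prod (WW 2 1 \<xi>)) (simplex2 T) = Ifun T (X \<xi>)"
    have p: "from_nat_into D i \<in> simplex2 T" using Drange Dsub by auto
    have "restrict (case_prod (WW 2 1 \<xi>)) (simplex2 T) (from_nat_into D i) = Ifun T (X \<xi>) (from_nat_into D i)"
      by (rule fun_cong[OF eq])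
    then show "case_prod (WW 2 1 \<xi>) (from_nat_into D i) = Ifun T (X \<xi>) (from_nat_into D i)"
      by (simp only: restrict_apply'[OF p])
  next
    fix \<xi> assume \<xi>: "\<xi> \<in> space Q" and eq: "\<forall>i. case_prod (WW 2 1 \<xi>) (from_nat_into D i) = Ifun T (X \<xi>) (from_nat_into D i)"
    have eqD: "case_prod (WW 2 1 \<xi>) p = Ifun T (X \<xi>) p" if "p \<in> Dset T" for p
    proof -
      have "p \<in> range (from_nat_into D)" using that Drange unfolding D_def by simp
      then obtain i where "p = from_nat_into D i" by (rule rangeE)
      then show ?thesis using eq by simp
    qed
    show "restrict (case_prod (WW 2 1 \<xi>)) (simplex2 T) = Ifun T (X \<xi>)"
    proof (rule ext)
      fix x show "restrict (case_prod (WW 2 1 \<xi>)) (simplex2 T) x = Ifun T (X \<xi>) x"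
      proof (cases "x \<in> simplex2 T")
        case True
        then show ?thesis
          using dense_eq[OF _ Ifun_cont[OF T] eqD True] cont_WW[OF _ _ \<xi>, of 2 1] by simp
      next
        case False
        then show ?thesis by (simp add: Ifun_def)
      qed
    qed
  qed
  have [measurable]: "Measurable.pred Q (\<lambda>\<xi>. case_prod (WW 2 1 \<xi>) (from_nat_into D i) = Ifun T (X \<xi>) (from_nat_into D i))" for i
  proof -
    have "from_nat_into D i \<in> simplex2 T" using Drange Dsub by auto
    from measurable_equality_set[OF A[OF this] B[OF this]] show ?thesis
      unfolding Measurable.pred_def .
  qed
  have Sm: "{\<xi> \<in> space Q. restrict (case_prod (WW 2 1 \<xi>)) (simplex2 T) = Ifun T (X \<xi>)} \<in> sets Q"
    unfolding eqset by measurable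
  have "AE \<xi> in Q. restrict (case_prod (WW 2 1 \<xi>)) (simplex2 T) = Ifun T (X \<xi>)"
    using approx AE_space
  proof eventually_elim
    case (elim \<xi>) then show ?case using good by blast
  qed
  then have "measure Q {\<xi> \<in> space Q. restrict (case_prod (WW 2 1 \<xi>)) (simplex2 T) = Ifun T (X \<xi>)} = 1"
    using prob_space.prob_Collect_eq_1[OF Q Sm] by simp
  then show ?thesis
    using Ifun_meas[OF T] unfolding X_def by blast
qed

end
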